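(* Let $\mathsf{A}=(A_1,\dots,A_N)\in GL_2(\mathbb{R})^N$ be dominated and reducible, with $\|A_i\|<1$ for all $i$, such that $X_F$ is not a singleton. Then, after possibly a change of basis, $$A_i=\begin{pmatrix}a_i&b_i\\0&d_i\end{pmatrix}\quad\text{with }0<|d_i|<|a_i|<1\text{ for all }i\in\{1,\dots,N\},$$ and the matrices $A_1,\dots,A_N$ are not simultaneously diagonalizable.
   Context: For a finite word $\mathtt{i}=i_1\cdots i_n$, $A_{\mathtt{i}}=A_{i_1}\cdots A_{i_n}$, $|\mathtt{i}|=n$; $\Sigma_*$ is the set of finite words. Dominated: $\exists C>0,0<\tau<1$ with $\alpha_2(A_{\mathtt{i}})\le C\tau^{|\mathtt{i}|}\alpha_1(A_{\mathtt{i}})$ for all $\mathtt{i}\in\Sigma_*$, where $\alpha_1\ge\alpha_2$ are singular values. Reducible: some line through the origin is invariant under all $A_i$. Furstenberg directions: $X_F=\{A\mathbb{R}^2: A$ rank-one matrix in the closure of $\{cA_{i_1}^{-1}\cdots A_{i_n}^{-1}: c\in\mathbb{R}, i_1\cdots i_n\in\Sigma_*\}\}$. *)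

theory Defs
  imports "HOL-Analysis.Analysis"
begin

type_synonym mat2 = "real^2^2"

text \<open>Product A_w = A_{i1} ... A_{in} for a finite word w = [i1,...,in].\<close>
definition word_prod :: "(nat \<Rightarrow> mat2) \<Rightarrow> nat list \<Rightarrow> mat2" where
  "word_prod A w = foldr (\<lambda>i M. A i ** M) w (mat 1)"

text \<open>Product A_{i1}^{-1} ... A_{in}^{-1}.\<close>
definition word_inv_prod :: "(nat \<Rightarrow> mat2) \<Rightarrow> nat list \<Rightarrow> mat2" where
  "word_inv_prod A w = foldr (\<lambda>i M. matrix_inv (A i) ** M) w (mat 1)"

text \<open>Finite words over the alphabet {0,...,N-1}.\<close>
definition words :: "nat \<Rightarrow> nat list set" where
  "words N = lists {..<N}"

text \<open>Singular values: square roots of the eigenvalues of A^T A (largest and smallest).\<close>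
definition eig_AtA :: "mat2 \<Rightarrow> real set" where
  "eig_AtA M = {l. \<exists>v. v \<noteq> 0 \<and> (transpose M ** M) *v v = l *\<^sub>R v}"

definition sv1 :: "mat2 \<Rightarrow> real" where
  "sv1 M = sqrt (Max (eig_AtA M))"

definition sv2 :: "mat2 \<Rightarrow> real" where
  "sv2 M = sqrt (Min (eig_AtA M))"

definition dominated :: "nat \<Rightarrow> (nat \<Rightarrow> mat2) \<Rightarrow> bool" where
  "dominated N A \<longleftrightarrow> (\<exists>C>0. \<exists>\<tau>. 0 < \<tau> \<and> \<tau> < 1 \<and>
     (\<forall>w \<in> words N. sv2 (word_prod A w) \<le> C * \<tau> ^ length w * sv1 (word_prod A w)))"

definition reducible :: "nat \<Rightarrow> (nat \<Rightarrow> mat2) \<Rightarrow> bool" where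
  "reducible N A \<longleftrightarrow> (\<exists>v::real^2. v \<noteq> 0 \<and> (\<forall>i<N. \<exists>c::real. A i *v v = c *\<^sub>R v))"

text \<open>Furstenberg directions: images of rank-one matrices in the closure of
  {c A_{i1}^{-1}...A_{in}^{-1}}.\<close>
definition furstenberg_dirs :: "nat \<Rightarrow> (nat \<Rightarrow> mat2) \<Rightarrow> (real^2) set set" where
  "furstenberg_dirs N A =
     {range ((*v) B) | B. rank B = 1 \<and>
        B \<in> closure {c *\<^sub>R word_inv_prod A w | c w. w \<in> words N}}"

definition diagonal_mat :: "mat2 \<Rightarrow> bool" where
  "diagonal_mat M \<longleftrightarrow> (\<forall>j k. j \<noteq> k \<longrightarrow> M $ j $ k = 0)"

text \<open>Operator norm of a matrix (w.r.t. the Euclidean norm).\<close>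
definition opnorm :: "mat2 \<Rightarrow> real" where
  "opnorm M = onorm ((*v) M)"

end

theory Submission
  imports Defs
begin


lemma mm: "((A::real^2^2) ** B)$i$j = A$i$1 * B$1$j + A$i$2 * B$2$j"
  by (simp add: matrix_matrix_mult_def sum_2)
lemma mv: "((A::real^2^2) *v x)$i = A$i$1 * x$1 + A$i$2 * x$2"
  by (simp add: matrix_vector_mult_def sum_2)
lemma meq: "(A::real^2^2) = B \<longleftrightarrow> A$1$1 = B$1$1 \<and> A$1$2 = B$1$2 \<and> A$2$1 = B$2$1 \<and> A$2$2 = B$2$2"
  by (auto simp: vec_eq_iff forall_2)
lemma veq: "(x::real^2) = y \<longleftrightarrow> x$1 = y$1 \<and> x$2 = y$2"
  by (auto simp: vec_eq_iff forall_2)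
lemma mat1: "(mat 1 :: real^2^2)$1$1 = 1" "(mat 1 :: real^2^2)$1$2 = 0"
   "(mat 1 :: real^2^2)$2$1 = 0" "(mat 1 :: real^2^2)$2$2 = 1"
  by (simp_all add: mat_def)

definition mk :: "real \<Rightarrow> real \<Rightarrow> real \<Rightarrow> real \<Rightarrow> real^2^2" where
  "mk a b c d = (\<chi> i j. if i = 1 then (if j = 1 then a else b) else (if j = 1 then c else d))"
lemma mk_nth[simp]: "(mk a b c d)$1$1 = a" "(mk a b c d)$1$2 = b" "(mk a b c d)$2$1 = c" "(mk a b c d)$2$2 = d"
  by (simp_all add: mk_def)

definition frob :: "real^2^2 \<Rightarrow> real" where
  "frob M = (M$1$1)^2 + (M$1$2)^2 + (M$2$1)^2 + (M$2$2)^2"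

lemma frob_nonneg: "0 \<le> frob M" by (simp add: frob_def)

lemma cs2: "((a::real)*b + c*d)^2 \<le> (a^2+c^2)*(b^2+d^2)"
proof -
  have "0 \<le> (a*d - c*b)^2" by simp
  thus ?thesis by (simp add: power2_eq_square algebra_simps)
qed

lemma frob_mult: "frob (X ** Y) \<le> frob X * frob Y"
proof -
  have "frob (X ** Y) \<le> (X$1$1^2 + X$1$2^2)*(Y$1$1^2+Y$2$1^2) + (X$1$1^2 + X$1$2^2)*(Y$1$2^2+Y$2$2^2)
     + (X$2$1^2 + X$2$2^2)*(Y$1$1^2+Y$2$1^2) + (X$2$1^2 + X$2$2^2)*(Y$1$2^2+Y$2$2^2)"
    unfolding frob_def mm by (intro add_mono cs2)
  also have "\<dots> = frob X * frob Y" by (simp add: frob_def algebra_simps)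
  finally show ?thesis .
qed

lemma inv_props: assumes "invertible (M::real^2^2)"
  shows "M ** matrix_inv M = mat 1" "matrix_inv M ** M = mat 1"
  using someI_ex[OF assms[unfolded invertible_def]] unfolding matrix_inv_def by auto

lemma inv_unique: assumes "invertible (M::real^2^2)" "X ** M = mat 1"
  shows "matrix_inv M = X"
proof -
  have "X = X ** (M ** matrix_inv M)" using inv_props(1)[OF assms(1)] by simp
  also have "\<dots> = matrix_inv M" by (simp add: matrix_mul_assoc assms(2))
  finally show ?thesis by simp
qed

lemma det_conj: assumes "R' ** R = mat 1" shows "det (R' ** X ** (R::real^2^2)) = det X"
proof -
  have "det R' * det R = 1" using det_mul[of R' R] assms by (simp add: det_I)
  thus ?thesis by (simp add: det_mul)
qed

lemma eig_sub: "eig_AtA M \<subseteq> {(frob M + sqrt (frob M ^2 - 4*(det M)^2))/2, (frob M - sqrt (frob M ^2 - 4*(det M)^2))/2}"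
proof
  fix l assume "l \<in> eig_AtA M"
  then obtain v where v: "v \<noteq> 0" "(transpose M ** M) *v v = l *\<^sub>R v" unfolding eig_AtA_def by auto
  define p where "p = M$1$1"
  define q where "q = M$1$2"
  define r where "r = M$2$1"
  define u where "u = M$2$2"
  have e1: "(p*p+r*r) * v$1 + (p*q+r*u) * v$2 = l * v$1"
    using v(2) unfolding veq by (simp add: mv mm transpose_def p_def q_def r_def u_def)
  have e2: "(p*q+r*u) * v$1 + (q*q+u*u) * v$2 = l * v$2"
    using v(2) unfolding veq by (simp add: mv mm transpose_def p_def q_def r_def u_def algebra_simps)
  define a where "a = p*p+r*r - l"
  define b where "b = p*q+r*u"
  define c where "c = q*q+u*u - l"
  have f1: "a * v$1 + b * v$2 = 0" using e1 unfolding a_def b_def by (simp add: algebra_simps)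
  have f2: "b * v$1 + c * v$2 = 0" using e2 unfolding c_def b_def by (simp add: algebra_simps)
  have g1: "(a*c - b*b) * v$1 = 0"
  proof -
    have "(a*c - b*b) * v$1 = c * (a * v$1 + b * v$2) - b * (b * v$1 + c * v$2)" by (simp add: algebra_simps)
    thus ?thesis using f1 f2 by simp
  qed
  have g2: "(a*c - b*b) * v$2 = 0"
  proof -
    have "(a*c - b*b) * v$2 = a * (b * v$1 + c * v$2) - b * (a * v$1 + b * v$2)" by (simp add: algebra_simps)
    thus ?thesis using f1 f2 by simp
  qed
  have fr: "frob M = p*p+q*q+r*r+u*u" "det M = p*u - q*r"
    by (simp_all add: frob_def det_2 p_def q_def r_def u_def power2_eq_square)
  have id: "a*c - b*b = l^2 - frob M * l + (det M)^2"
    unfolding fr a_def b_def c_def by (simp add: power2_eq_square algebra_simps)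
  have ch: "(l^2 - frob M * l + (det M)^2) * v$k = 0" if "k = 1 \<or> k = 2" for k
    using that g1 g2 id by auto
  have "v$1 \<noteq> 0 \<or> v$2 \<noteq> 0" using v(1) by (auto simp: veq)
  hence ql: "l^2 - frob M * l + (det M)^2 = 0" using ch by auto
  define t where "t = frob M"
  have "(2*l - t)^2 = t^2 - 4*(det M)^2" using ql unfolding t_def[symmetric] by (simp add: power2_eq_square algebra_simps)
  hence "\<bar>2*l - t\<bar> = sqrt (t^2 - 4*(det M)^2)" by (metis real_sqrt_abs)
  thus "l \<in> {(frob M + sqrt (frob M ^2 - 4*(det M)^2))/2, (frob M - sqrt (frob M ^2 - 4*(det M)^2))/2}"
    unfolding t_def[symmetric] by (cases "2*l - t \<ge> 0") auto
qed


lemma disc_id: "frob M ^2 - 4*(det M)^2 = ((M$1$1)^2+(M$2$1)^2 - (M$1$2)^2 - (M$2$2)^2)^2 + 4*(M$1$1*M$1$2 + M$2$1*M$2$2)^2"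
  by (simp add: frob_def det_2 power2_eq_square algebra_simps)

lemma eig_ne: "eig_AtA M \<noteq> {}"
proof -
  define S where "S = transpose M ** M"
  have S: "S$1$1 = (M$1$1)^2+(M$2$1)^2" "S$1$2 = M$1$1*M$1$2 + M$2$1*M$2$2"
     "S$2$1 = M$1$1*M$1$2 + M$2$1*M$2$2" "S$2$2 = (M$1$2)^2+(M$2$2)^2"
    by (simp_all add: S_def mm transpose_def power2_eq_square mult.commute)
  show ?thesis
  proof (cases "S$1$2 = 0")
    case True
    have "S *v axis 1 1 = (S$1$1) *\<^sub>R axis 1 1" using True S unfolding veq
      by (simp add: mv axis_def)
    moreover have "axis 1 (1::real) \<noteq> (0::real^2)" by (simp add: axis_eq_0_iff)
    ultimately show ?thesis unfolding eig_AtA_def S_def by blast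
  next
    case False
    define dd where "dd = frob M ^2 - 4*(det M)^2"
    define l where "l = (frob M + sqrt dd)/2"
    have dd0: "dd \<ge> 0" unfolding dd_def disc_id by simp
    have fr: "frob M = S$1$1 + S$2$2" "(det M)^2 = S$1$1*S$2$2 - S$1$2*S$1$2"
      unfolding S by (simp_all add: frob_def det_2 power2_eq_square algebra_simps)
    have sq: "sqrt dd * sqrt dd = dd" using dd0 by simp
    have a: "2*l - frob M = sqrt dd" by (simp add: l_def field_simps)
    have "4*(l*l - frob M * l + (det M)^2) = (2*l - frob M)^2 - dd"
      by (simp add: dd_def power2_eq_square algebra_simps)
    also have "\<dots> = 0" unfolding a using dd0 by simp
    finally have root: "l*l - (S$1$1 + S$2$2)*l + (S$1$1*S$2$2 - S$1$2*S$1$2) = 0"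
      unfolding fr by simp
    define v :: "real^2" where "v = (\<chi> i. if i = 1 then S$1$2 else l - S$1$1)"
    have v1: "v$1 = S$1$2" "v$2 = l - S$1$1" by (simp_all add: v_def)
    have "S *v v = l *\<^sub>R v" unfolding veq using root S
      by (simp add: mv v1) (simp add: algebra_simps)
    moreover have "v \<noteq> 0" using False v1 by (auto simp: veq)
    ultimately show ?thesis unfolding eig_AtA_def S_def by blast
  qed
qed

lemma sv_det: assumes "sv2 M \<le> K * sv1 M" "0 \<le> K"
  shows "\<bar>det M\<bar> \<le> K * frob M"
proof -
  define t where "t = frob M"
  define dd where "dd = frob M ^2 - 4*(det M)^2"
  define lp where "lp = (t + sqrt dd)/2"
  define lm where "lm = (t - sqrt dd)/2"
  have dd0: "dd \<ge> 0" unfolding dd_def disc_id by simp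
  have t0: "t \<ge> 0" by (simp add: t_def frob_nonneg)
  have "dd \<le> t^2" unfolding dd_def t_def by simp
  hence "sqrt dd \<le> t" using t0 real_sqrt_le_mono[of dd "t^2"] by simp
  hence lm0: "0 \<le> lm" unfolding lm_def by simp
  have lmp: "lm \<le> lp" unfolding lm_def lp_def using dd0 by simp
  have lpt: "lp \<le> t" using lm0 unfolding lm_def lp_def by simp
  have prod: "lm * lp = (det M)^2"
  proof -
    have "lm * lp = (t*t - sqrt dd * sqrt dd)/4" unfolding lm_def lp_def by (simp add: algebra_simps)
    also have "\<dots> = (det M)^2" using dd0 unfolding dd_def t_def by (simp add: power2_eq_square)
    finally show ?thesis .
  qed
  have sub: "eig_AtA M \<subseteq> {lp, lm}" using eig_sub[of M] unfolding lp_def lm_def t_def dd_def .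
  have fin: "finite (eig_AtA M)" using finite_subset[OF sub] by simp
  have ne: "eig_AtA M \<noteq> {}" by (rule eig_ne)
  have "Max (eig_AtA M) \<in> eig_AtA M" using fin ne by simp
  hence mx: "Max (eig_AtA M) \<le> lp" using sub lmp by auto
  have "Min (eig_AtA M) \<in> eig_AtA M" using fin ne by simp
  hence mn: "lm \<le> Min (eig_AtA M)" using sub lmp by auto
  have "sqrt lm \<le> K * sqrt lp"
  proof -
    have "sqrt lm \<le> sv2 M" unfolding sv2_def using mn by simp
    also have "\<dots> \<le> K * sv1 M" by fact
    also have "\<dots> \<le> K * sqrt lp" unfolding sv1_def using mx assms(2) by (simp add: mult_left_mono)
    finally show ?thesis .
  qed
  hence "lm \<le> K^2 * lp"
  proof -
    assume h: "sqrt lm \<le> K * sqrt lp"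
    have "lm = (sqrt lm)^2" using lm0 by simp
    also have "\<dots> \<le> (K * sqrt lp)^2" by (rule power_mono[OF h]) (simp add: lm0)
    also have "\<dots> = K^2 * lp" using lm0 lmp by (simp add: power_mult_distrib)
    finally show ?thesis .
  qed
  hence "lm * lp \<le> K^2 * lp * lp" using lm0 lmp by (simp add: mult_right_mono)
  also have "\<dots> \<le> K^2 * t * t" using lpt lm0 lmp
    by (simp add: mult_mono mult_left_mono)
  finally have "(det M)^2 \<le> (K*t)^2" using prod by (simp add: power2_eq_square algebra_simps)
  hence "\<bar>det M\<bar> \<le> \<bar>K*t\<bar>" by (simp add: abs_le_square_iff)
  thus ?thesis using t0 assms(2) unfolding t_def by simp
qed



definition mp :: "real^2^2 \<Rightarrow> nat \<Rightarrow> real^2^2" where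
  "mp W k = ((\<lambda>X. W ** X) ^^ k) (mat 1)"

lemma mp_0[simp]: "mp W 0 = mat 1" and mp_Suc: "mp W (Suc k) = W ** mp W k"
  by (simp_all add: mp_def)

lemma wp_Nil[simp]: "word_prod A [] = mat 1" and wp_Cons[simp]: "word_prod A (i#w) = A i ** word_prod A w"
  by (simp_all add: word_prod_def)
lemma wip_Nil[simp]: "word_inv_prod A [] = mat 1" and wip_Cons[simp]: "word_inv_prod A (i#w) = matrix_inv (A i) ** word_inv_prod A w"
  by (simp_all add: word_inv_prod_def)

lemma wp_append: "word_prod A (u @ v) = word_prod A u ** word_prod A v"
  by (induction u) (simp_all add: matrix_mul_assoc)

lemma wp_rep: "word_prod A (concat (replicate k w)) = mp (word_prod A w) k"
  by (induction k) (simp_all add: wp_append mp_Suc)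

lemma wip_rep: "word_inv_prod A (replicate n i) = mp (matrix_inv (A i)) n"
  by (induction n) (simp_all add: mp_Suc)

lemma foldr_conj:
  assumes "R' ** R = mat 1" "R ** R' = mat (1::real)" "\<forall>i\<in>set w. B i = R ** C i ** R'"
  shows "foldr (\<lambda>i M. B i ** M) w (mat 1) = R ** foldr (\<lambda>i M. C i ** M) w (mat 1) ** (R'::real^2^2)"
  using assms(3)
proof (induction w)
  case Nil then show ?case using assms(2) by simp
next
  case (Cons i w)
  have "B i ** (R ** foldr (\<lambda>i M. C i ** M) w (mat 1) ** R') =
        R ** C i ** (R' ** R) ** foldr (\<lambda>i M. C i ** M) w (mat 1) ** R'"
    using Cons by (simp add: matrix_mul_assoc)
  also have "\<dots> = R ** (C i ** foldr (\<lambda>i M. C i ** M) w (mat 1)) ** R'"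
    using assms(1) by (simp add: matrix_mul_assoc)
  finally show ?case using Cons by simp
qed

lemma foldr_tri:
  assumes "\<forall>i\<in>set w. (C i :: real^2^2)$2$1 = 0"
  shows "(foldr (\<lambda>i M. C i ** M) w (mat 1))$2$1 = 0 \<and>
         (foldr (\<lambda>i M. C i ** M) w (mat 1))$1$1 = prod_list (map (\<lambda>i. C i$1$1) w) \<and>
         (foldr (\<lambda>i M. C i ** M) w (mat 1))$2$2 = prod_list (map (\<lambda>i. C i$2$2) w)"
  using assms by (induction w) (auto simp: mm mat1)

lemma inv_tri:
  assumes "invertible (T::real^2^2)" "T$2$1 = 0"
  shows "T$1$1 \<noteq> 0" "T$2$2 \<noteq> 0"
    "matrix_inv T = mk (1/T$1$1) (- T$1$2/(T$1$1*T$2$2)) 0 (1/T$2$2)"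
proof -
  have "det T \<noteq> 0" using assms(1) invertible_det_nz by blast
  hence d: "T$1$1 * T$2$2 \<noteq> 0" using assms(2) by (simp add: det_2)
  thus "T$1$1 \<noteq> 0" "T$2$2 \<noteq> 0" by auto
  show "matrix_inv T = mk (1/T$1$1) (- T$1$2/(T$1$1*T$2$2)) 0 (1/T$2$2)"
    apply (rule inv_unique[OF assms(1)])
    using d assms(2) by (simp add: meq mm mat1 field_simps)
qed

lemma mp_tri:
  assumes "(W::real^2^2)$2$1 = 0"
  defines "\<rho> \<equiv> max \<bar>W$1$1\<bar> \<bar>W$2$2\<bar>"
  shows "(mp W k)$2$1 = 0 \<and> (mp W k)$1$1 = (W$1$1)^k \<and> (mp W k)$2$2 = (W$2$2)^k \<and>
    (W$1$1 - W$2$2) * (mp W k)$1$2 = W$1$2 * ((W$1$1)^k - (W$2$2)^k) \<and>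
    \<rho> * \<bar>(mp W k)$1$2\<bar> \<le> real k * \<bar>W$1$2\<bar> * \<rho>^k"
proof (induction k)
  case 0 then show ?case by (simp add: mat1)
next
  case (Suc k)
  define x where "x = (mp W k)$1$2"
  have x': "(mp W (Suc k))$1$2 = W$1$1 * x + W$1$2 * (W$2$2)^k"
    using Suc by (simp add: mp_Suc mm x_def)
  have r0: "0 \<le> \<rho>" unfolding \<rho>_def by simp
  have ra: "\<bar>W$1$1\<bar> \<le> \<rho>" and rd: "\<bar>W$2$2\<bar> \<le> \<rho>" unfolding \<rho>_def by auto
  have "\<rho> * \<bar>W$1$1 * x + W$1$2 * (W$2$2)^k\<bar> \<le> \<bar>W$1$1\<bar> * (\<rho> * \<bar>x\<bar>) + \<rho> * (\<bar>W$1$2\<bar> * \<bar>W$2$2\<bar>^k)"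
  proof -
    have "\<bar>W$1$1 * x + W$1$2 * (W$2$2)^k\<bar> \<le> \<bar>W$1$1\<bar> * \<bar>x\<bar> + \<bar>W$1$2\<bar> * \<bar>W$2$2\<bar>^k"
      by (metis abs_mult abs_triangle_ineq power_abs)
    hence "\<rho> * \<bar>W$1$1 * x + W$1$2 * (W$2$2)^k\<bar> \<le> \<rho> * (\<bar>W$1$1\<bar> * \<bar>x\<bar> + \<bar>W$1$2\<bar> * \<bar>W$2$2\<bar>^k)"
      using r0 by (simp add: mult_left_mono)
    thus ?thesis by (simp add: algebra_simps)
  qed
  also have "\<dots> \<le> \<rho> * (real k * \<bar>W$1$2\<bar> * \<rho>^k) + \<rho> * (\<bar>W$1$2\<bar> * \<rho>^k)"
  proof (rule add_mono)
    show "\<bar>W$1$1\<bar> * (\<rho> * \<bar>x\<bar>) \<le> \<rho> * (real k * \<bar>W$1$2\<bar> * \<rho>^k)"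
      apply (rule mult_mono) using Suc ra r0 by (auto simp: x_def)
    have "\<bar>W$2$2\<bar>^k \<le> \<rho>^k" using rd by (simp add: power_mono)
    thus "\<rho> * (\<bar>W$1$2\<bar> * \<bar>W$2$2\<bar>^k) \<le> \<rho> * (\<bar>W$1$2\<bar> * \<rho>^k)"
      using r0 by (simp add: mult_left_mono)
  qed
  also have "\<dots> = real (Suc k) * \<bar>W$1$2\<bar> * \<rho>^(Suc k)" by (simp add: algebra_simps)
  finally have b: "\<rho> * \<bar>(mp W (Suc k))$1$2\<bar> \<le> real (Suc k) * \<bar>W$1$2\<bar> * \<rho>^(Suc k)" using x' by simp
  have "(W$1$1 - W$2$2) * (mp W (Suc k))$1$2 = W$1$1 * ((W$1$1 - W$2$2) * x) + (W$1$1 - W$2$2) * W$1$2 * (W$2$2)^k"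
    using x' by (simp add: algebra_simps)
  also have "\<dots> = W$1$1 * (W$1$2 * ((W$1$1)^k - (W$2$2)^k)) + (W$1$1 - W$2$2) * W$1$2 * (W$2$2)^k"
    using Suc by (simp add: x_def)
  also have "\<dots> = W$1$2 * ((W$1$1)^Suc k - (W$2$2)^Suc k)" by (simp add: algebra_simps)
  finally show ?case using Suc b assms(1) by (simp add: mp_Suc mm)
qed



lemma growth: assumes "(q::real) > 1" "E \<ge> 0" shows "\<exists>k\<ge>1. E * (real k)^2 < q^k"
proof -
  define s where "s = sqrt (sqrt q)"
  have s2: "s^2 = sqrt q" unfolding s_def using assms(1) by simp
  have s4: "s^4 = q"
  proof -
    have "s^4 = (s^2)^2" by simp
    also have "\<dots> = q" unfolding s2 using assms(1) by simp
    finally show ?thesis .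
  qed
  have s1: "s > 1" unfolding s_def using assms(1) by simp
  define c where "c = (s - 1)^4"
  have c0: "c > 0" unfolding c_def using s1 by simp
  define k where "k = nat \<lceil>E / c\<rceil> + 1"
  have k1: "k \<ge> 1" unfolding k_def by simp
  have kE: "real k * c > E"
  proof -
    have "real k > E / c" unfolding k_def by linarith
    thus ?thesis using c0 by (simp add: field_simps)
  qed
  have b: "1 + real k * (s - 1) \<le> s^k" using Bernoulli_inequality[of "s - 1" k] s1 by simp
  have ks: "real k * (s - 1) \<le> s^k" using b by simp
  have "E * (real k)^2 < real k * c * (real k)^2" using kE k1 by simp
  also have "\<dots> \<le> real k * real k * c * (real k)^2" using k1 c0 by (simp add: mult_right_mono)
  also have "\<dots> = (real k * (s - 1))^4" unfolding c_def by (simp add: power2_eq_square power4_eq_xxxx algebra_simps)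
  also have "\<dots> \<le> (s^k)^4" by (rule power_mono[OF ks]) (use s1 in simp)
  also have "\<dots> = q^k" using s4 by (metis power_mult mult.commute)
  finally show ?thesis using k1 by blast
qed

lemma consist:
  fixes a d :: "nat \<Rightarrow> real" and \<tau> :: real
  assumes nz: "\<forall>i<N. a i \<noteq> 0 \<and> d i \<noteq> 0" and t: "0 < \<tau>" "\<tau> < 1"
    and H: "\<forall>w\<in>words N. w \<noteq> [] \<longrightarrow>
      (\<bar>prod_list (map a w)\<bar> \<le> \<tau>^length w * \<bar>prod_list (map d w)\<bar> \<or>
       \<bar>prod_list (map d w)\<bar> \<le> \<tau>^length w * \<bar>prod_list (map a w)\<bar>)"
  shows "(\<forall>i<N. \<bar>d i\<bar> < \<bar>a i\<bar>) \<or> (\<forall>i<N. \<bar>a i\<bar> < \<bar>d i\<bar>)"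
proof (rule ccontr)
  assume neg: "\<not> ?thesis"
  have ne: "\<bar>a i\<bar> \<noteq> \<bar>d i\<bar>" if "i < N" for i
  proof
    assume eq: "\<bar>a i\<bar> = \<bar>d i\<bar>"
    have "[i] \<in> words N" using that by (simp add: words_def)
    hence "\<bar>a i\<bar> \<le> \<tau> * \<bar>d i\<bar> \<or> \<bar>d i\<bar> \<le> \<tau> * \<bar>a i\<bar>" using H by fastforce
    thus False using eq t nz that by auto
  qed
  obtain j where j: "j < N" "\<bar>a j\<bar> < \<bar>d j\<bar>" using neg ne by force
  obtain i where i: "i < N" "\<bar>d i\<bar> < \<bar>a i\<bar>" using neg ne by force
  define K where "K = max (\<bar>a i\<bar> / \<bar>d i\<bar>) (\<bar>d j\<bar> / \<bar>a j\<bar>)"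
  have K1: "1 \<le> K" unfolding K_def using i nz by (auto simp: le_max_iff_disj field_simps)
  have Ki: "\<bar>d i\<bar> \<le> K * \<bar>a i\<bar>" "\<bar>a i\<bar> \<le> K * \<bar>d i\<bar>"
  proof -
    show "\<bar>d i\<bar> \<le> K * \<bar>a i\<bar>" using i K1 nz by (smt (verit) mult_le_cancel_right1)
    have "\<bar>a i\<bar> / \<bar>d i\<bar> \<le> K" unfolding K_def by simp
    thus "\<bar>a i\<bar> \<le> K * \<bar>d i\<bar>" using i nz by (simp add: pos_divide_le_eq mult.commute)
  qed
  have Kj: "\<bar>a j\<bar> \<le> K * \<bar>d j\<bar>" "\<bar>d j\<bar> \<le> K * \<bar>a j\<bar>"
  proof -
    show "\<bar>a j\<bar> \<le> K * \<bar>d j\<bar>" using j K1 nz by (smt (verit) mult_le_cancel_right1)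
    have "\<bar>d j\<bar> / \<bar>a j\<bar> \<le> K" unfolding K_def by simp
    thus "\<bar>d j\<bar> \<le> K * \<bar>a j\<bar>" using j nz by (simp add: pos_divide_le_eq mult.commute)
  qed
  define PA where "PA w = prod_list (map a w)" for w
  define PD where "PD w = prod_list (map d w)" for w
  define wd where "wd n = rec_nat [] (\<lambda>_ w. (if \<bar>PA w\<bar> > \<bar>PD w\<bar> then j else i) # w) n" for n
  have wd0: "wd 0 = []" and wdS: "wd (Suc n) = (if \<bar>PA (wd n)\<bar> > \<bar>PD (wd n)\<bar> then j else i) # wd n" for n
    by (simp_all add: wd_def)
  have inv: "wd n \<in> words N \<and> length (wd n) = n \<and> \<bar>PA (wd n)\<bar> \<le> K * \<bar>PD (wd n)\<bar> \<and> \<bar>PD (wd n)\<bar> \<le> K * \<bar>PA (wd n)\<bar>" for n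
  proof (induction n)
    case 0 then show ?case using K1 by (simp add: wd0 PA_def PD_def words_def)
  next
    case (Suc n)
    define x where "x = \<bar>PA (wd n)\<bar>"
    define y where "y = \<bar>PD (wd n)\<bar>"
    have x0: "0 \<le> x" and y0: "0 \<le> y" by (simp_all add: x_def y_def)
    have IH: "x \<le> K * y" "y \<le> K * x" using Suc by (simp_all add: x_def y_def)
    show ?case
    proof (cases "x > y")
      case True
      have "\<bar>a j\<bar> * x \<le> \<bar>d j\<bar> * (K * y)" using j IH x0 by (intro mult_mono) auto
      moreover have "\<bar>d j\<bar> * y \<le> (K * \<bar>a j\<bar>) * x" using Kj True y0 by (intro mult_mono) auto
      ultimately show ?thesis using Suc True j unfolding x_def y_def
        by (simp add: wdS PA_def PD_def abs_mult words_def mult_ac)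
    next
      case False
      have "\<bar>a i\<bar> * x \<le> (K * \<bar>d i\<bar>) * y" using Ki False x0 by (intro mult_mono) auto
      moreover have "\<bar>d i\<bar> * y \<le> \<bar>a i\<bar> * (K * x)" using i IH y0 by (intro mult_mono) auto
      ultimately show ?thesis using Suc False i unfolding x_def y_def
        by (simp add: wdS PA_def PD_def abs_mult words_def mult_ac)
    qed
  qed
  obtain n where n: "\<tau>^n < 1/K" using real_arch_pow_inv[of "1/K" \<tau>] K1 t by auto
  define w where "w = wd (Suc n)"
  have tn: "\<tau>^(Suc n) * K < 1"
  proof -
    have "\<tau>^(Suc n) \<le> \<tau>^n" using t by (simp add: power_decreasing_iff)
    hence "\<tau>^(Suc n) < 1/K" using n by linarith
    thus ?thesis using K1 by (simp add: field_simps)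
  qed
  have w: "w \<in> words N" "length w = Suc n" "\<bar>PA w\<bar> \<le> K * \<bar>PD w\<bar>" "\<bar>PD w\<bar> \<le> K * \<bar>PA w\<bar>"
    using inv[of "Suc n"] by (simp_all add: w_def)
  have sw: "set w \<subseteq> {..<N}" using w(1) by (auto simp: words_def)
  have PA0: "PA w \<noteq> 0" using sw nz by (auto simp: PA_def prod_list_zero_iff)
  have PD0: "PD w \<noteq> 0" using sw nz by (auto simp: PD_def prod_list_zero_iff)
  have "w \<noteq> []" using w(2) by auto
  hence "\<bar>PA w\<bar> \<le> \<tau>^Suc n * \<bar>PD w\<bar> \<or> \<bar>PD w\<bar> \<le> \<tau>^Suc n * \<bar>PA w\<bar>"
    using H w(1,2) unfolding PA_def PD_def by auto
  thus False
  proof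
    assume h: "\<bar>PA w\<bar> \<le> \<tau>^Suc n * \<bar>PD w\<bar>"
    also have "\<dots> \<le> \<tau>^Suc n * (K * \<bar>PA w\<bar>)" using w(4) t by (simp add: mult_left_mono)
    also have "\<dots> < \<bar>PA w\<bar>" using tn PA0 by (simp add: mult.assoc[symmetric])
    finally show False by simp
  next
    assume h: "\<bar>PD w\<bar> \<le> \<tau>^Suc n * \<bar>PA w\<bar>"
    also have "\<dots> \<le> \<tau>^Suc n * (K * \<bar>PD w\<bar>)" using w(3) t by (simp add: mult_left_mono)
    also have "\<dots> < \<bar>PD w\<bar>" using tn PD0 by (simp add: mult.assoc[symmetric])
    finally show False by simp
  qed
qed



lemma ratio:
  fixes W :: "real^2^2"
  assumes tri: "W$2$1 = 0" and nz: "W$1$1 \<noteq> 0" "W$2$2 \<noteq> 0" and C: "C > 0" and s: "\<sigma> > 0"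
    and H: "\<forall>k\<ge>1. \<bar>det (mp W k)\<bar> \<le> C * \<sigma>^k * frob (mp W k)"
  shows "\<bar>W$1$1\<bar> \<le> \<sigma> * \<bar>W$2$2\<bar> \<or> \<bar>W$2$2\<bar> \<le> \<sigma> * \<bar>W$1$1\<bar>"
proof (rule ccontr)
  assume "\<not> ?thesis"
  hence A1: "\<bar>W$1$1\<bar> > \<sigma> * \<bar>W$2$2\<bar>" and A2: "\<bar>W$2$2\<bar> > \<sigma> * \<bar>W$1$1\<bar>" by auto
  define \<alpha> where "\<alpha> = W$1$1"
  define \<delta> where "\<delta> = W$2$2"
  define \<beta> where "\<beta> = W$1$2"
  define \<rho> where "\<rho> = max \<bar>\<alpha>\<bar> \<bar>\<delta>\<bar>"
  have r0: "\<rho> > 0" using nz unfolding \<rho>_def \<alpha>_def by (simp add: less_max_iff_disj)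
  have ra: "\<bar>\<alpha>\<bar> \<le> \<rho>" and rd: "\<bar>\<delta>\<bar> \<le> \<rho>" unfolding \<rho>_def by auto
  have big: "\<bar>\<alpha>\<bar> * \<bar>\<delta>\<bar> > \<sigma> * \<rho>^2"
  proof (cases "\<bar>\<alpha>\<bar> \<le> \<bar>\<delta>\<bar>")
    case True
    hence "\<rho> = \<bar>\<delta>\<bar>" unfolding \<rho>_def by simp
    moreover have "\<bar>\<alpha>\<bar> * \<bar>\<delta>\<bar> > (\<sigma> * \<bar>\<delta>\<bar>) * \<bar>\<delta>\<bar>" using A1 nz unfolding \<alpha>_def \<delta>_def by simp
    ultimately show ?thesis by (simp add: power2_eq_square mult.assoc)
  next
    case False
    hence "\<rho> = \<bar>\<alpha>\<bar>" unfolding \<rho>_def by simp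
    moreover have "\<bar>\<alpha>\<bar> * \<bar>\<delta>\<bar> > \<bar>\<alpha>\<bar> * (\<sigma> * \<bar>\<alpha>\<bar>)" using A2 nz unfolding \<alpha>_def \<delta>_def by simp
    ultimately show ?thesis by (simp add: power2_eq_square mult_ac)
  qed
  define q where "q = \<bar>\<alpha>\<bar> * \<bar>\<delta>\<bar> / (\<sigma> * \<rho>^2)"
  have q1: "q > 1" unfolding q_def using big r0 s by simp
  have qe: "\<bar>\<alpha>\<bar> * \<bar>\<delta>\<bar> = q * \<sigma> * \<rho>^2" unfolding q_def using r0 s by simp
  define E where "E = C * (2 + \<beta>^2 / \<rho>^2)"
  have E0: "E \<ge> 0" unfolding E_def using C by simp
  obtain k where k: "k \<ge> 1" "E * (real k)^2 < q^k" using growth[OF q1 E0] by blast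
  define x where "x = (mp W k)$1$2"
  have mpk: "(mp W k)$2$1 = 0" "(mp W k)$1$1 = \<alpha>^k" "(mp W k)$2$2 = \<delta>^k" "\<rho> * \<bar>x\<bar> \<le> real k * \<bar>\<beta>\<bar> * \<rho>^k"
    using mp_tri[OF tri, of k] unfolding \<alpha>_def \<delta>_def \<beta>_def \<rho>_def x_def by auto
  define Z where "Z = \<sigma>^k * (\<rho>^k)^2"
  have Z0: "Z > 0" unfolding Z_def using s r0 by simp
  have det: "\<bar>det (mp W k)\<bar> = q^k * Z"
  proof -
    have "\<bar>det (mp W k)\<bar> = (\<bar>\<alpha>\<bar> * \<bar>\<delta>\<bar>)^k" using mpk by (simp add: det_2 abs_mult power_abs power_mult_distrib)
    also have "\<dots> = q^k * Z" unfolding qe Z_def by (simp add: power_mult_distrib power_mult[symmetric] mult.commute[of 2 k])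
    finally show ?thesis .
  qed
  have fa: "(\<alpha>^k)^2 \<le> (\<rho>^k)^2"
  proof -
    have "\<bar>\<alpha>\<bar>^k \<le> \<rho>^k" using ra by (intro power_mono) auto
    hence "(\<bar>\<alpha>\<bar>^k)^2 \<le> (\<rho>^k)^2" by (rule power_mono[where n=2]) auto
    thus ?thesis by (simp add: power_abs[symmetric])
  qed
  have fd: "(\<delta>^k)^2 \<le> (\<rho>^k)^2"
  proof -
    have "\<bar>\<delta>\<bar>^k \<le> \<rho>^k" using rd by (intro power_mono) auto
    hence "(\<bar>\<delta>\<bar>^k)^2 \<le> (\<rho>^k)^2" by (rule power_mono[where n=2]) auto
    thus ?thesis by (simp add: power_abs[symmetric])
  qed
  have fx: "x^2 \<le> (real k)^2 * (\<beta>^2 / \<rho>^2) * (\<rho>^k)^2"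
  proof -
    have "(\<rho> * \<bar>x\<bar>)^2 \<le> (real k * \<bar>\<beta>\<bar> * \<rho>^k)^2" using mpk(4) r0 by (intro power_mono) auto
    hence "\<rho>^2 * x^2 \<le> (real k)^2 * \<beta>^2 * (\<rho>^k)^2" by (simp add: power_mult_distrib)
    thus ?thesis using r0 by (simp add: field_simps)
  qed
  have "frob (mp W k) = (\<alpha>^k)^2 + x^2 + (\<delta>^k)^2" unfolding frob_def using mpk x_def by simp
  also have "\<dots> \<le> (\<rho>^k)^2 * (2 + (real k)^2 * (\<beta>^2 / \<rho>^2))" using fa fd fx by (simp add: algebra_simps)
  also have "\<dots> \<le> (\<rho>^k)^2 * ((real k)^2 * (2 + \<beta>^2 / \<rho>^2))"
  proof -
    have "(1::real) \<le> (real k)^2" using k(1) by simp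
    hence "2 + (real k)^2 * (\<beta>^2 / \<rho>^2) \<le> (real k)^2 * (2 + \<beta>^2 / \<rho>^2)" by (simp add: algebra_simps)
    thus ?thesis by (simp add: mult_left_mono)
  qed
  finally have fr: "frob (mp W k) \<le> (\<rho>^k)^2 * ((real k)^2 * (2 + \<beta>^2 / \<rho>^2))" .
  have "q^k * Z \<le> C * \<sigma>^k * frob (mp W k)" using H k(1) det by auto
  also have "\<dots> \<le> C * \<sigma>^k * ((\<rho>^k)^2 * ((real k)^2 * (2 + \<beta>^2 / \<rho>^2)))"
    using fr C s by (simp add: mult_left_mono)
  also have "\<dots> = E * (real k)^2 * Z" unfolding E_def Z_def by (simp add: mult_ac)
  finally have "q^k \<le> E * (real k)^2" using Z0 by simp
  thus False using k(2) by simp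
qed



lemma conj_facts:
  assumes R: "invertible (R::real^2^2)"
  shows "R ** matrix_inv R = mat 1" "matrix_inv R ** R = mat 1"
    "R ** (matrix_inv R ** X ** R) ** matrix_inv R = X"
    "det (matrix_inv R ** X ** R) = det X"
    "det (R ** X ** matrix_inv R) = det X"
proof -
  note i = inv_props[OF R]
  show "R ** matrix_inv R = mat 1" "matrix_inv R ** R = mat 1" by (fact i(1), fact i(2))
  show "R ** (matrix_inv R ** X ** R) ** matrix_inv R = X"
    by (simp add: matrix_mul_assoc i(1)) (simp add: matrix_mul_assoc[symmetric] i(1))
  show "det (matrix_inv R ** X ** R) = det X" by (rule det_conj[OF i(2)])
  show "det (R ** X ** matrix_inv R) = det X" by (rule det_conj[OF i(1)])
qed

lemma wp_conj:
  assumes R: "invertible (R::real^2^2)" and w: "set w \<subseteq> {..<N}"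
  shows "word_prod A w = R ** word_prod (\<lambda>i. matrix_inv R ** A i ** R) w ** matrix_inv R"
  unfolding word_prod_def
  apply (rule foldr_conj)
  using conj_facts[OF R] by auto

lemma frob_conj: "frob (R ** X ** R') \<le> frob R * frob R' * frob X"
proof -
  have "frob (R ** X ** R') \<le> frob (R ** X) * frob R'" by (rule frob_mult)
  also have "\<dots> \<le> (frob R * frob X) * frob R'" by (rule mult_right_mono[OF frob_mult frob_nonneg])
  finally show ?thesis by (simp add: mult_ac)
qed

lemma sign:
  fixes A :: "nat \<Rightarrow> real^2^2"
  assumes R: "invertible (R::real^2^2)" and Ai: "\<forall>i<N. invertible (A i)" and dom: "dominated N A"
    and tri: "\<forall>i<N. (matrix_inv R ** A i ** R)$2$1 = 0"
  shows "(\<forall>i<N. \<bar>(matrix_inv R ** A i ** R)$2$2\<bar> < \<bar>(matrix_inv R ** A i ** R)$1$1\<bar>) \<or>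
         (\<forall>i<N. \<bar>(matrix_inv R ** A i ** R)$1$1\<bar> < \<bar>(matrix_inv R ** A i ** R)$2$2\<bar>)"
proof -
  define T where "T = (\<lambda>i. matrix_inv R ** A i ** R)"
  have Tapp: "T i = matrix_inv R ** A i ** R" for i by (simp add: T_def)
  have Ti: "invertible (T i)" if "i < N" for i
    using Ai that conj_facts(4)[OF R] invertible_det_nz unfolding Tapp by metis
  have nz: "T i$1$1 \<noteq> 0 \<and> T i$2$2 \<noteq> 0" if "i < N" for i
    using inv_tri(1,2)[OF Ti[OF that]] tri that unfolding Tapp by auto
  obtain C \<tau> where C: "C > 0" and t: "0 < \<tau>" "\<tau> < 1"
    and D: "\<forall>w \<in> words N. sv2 (word_prod A w) \<le> C * \<tau> ^ length w * sv1 (word_prod A w)"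
    using dom unfolding dominated_def by blast
  define K0 where "K0 = frob R * frob (matrix_inv R)"
  have K0: "K0 \<ge> 0" unfolding K0_def by (simp add: frob_nonneg)
  define C' where "C' = C * (K0 + 1)"
  have C': "C' > 0" unfolding C'_def using C K0 by simp
  have D2: "\<bar>det (word_prod T w)\<bar> \<le> C' * \<tau>^length w * frob (word_prod T w)" if w: "w \<in> words N" for w
  proof -
    have sw: "set w \<subseteq> {..<N}" using w by (auto simp: words_def)
    have e: "word_prod A w = R ** word_prod T w ** matrix_inv R"
      using wp_conj[OF R sw] unfolding T_def .
    have "\<bar>det (word_prod T w)\<bar> = \<bar>det (word_prod A w)\<bar>" using conj_facts(5)[OF R] by (simp only: e)
    also have "\<dots> \<le> C * \<tau>^length w * frob (word_prod A w)"
      by (rule sv_det) (use D w C t in auto)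
    also have "\<dots> \<le> C * \<tau>^length w * (K0 * frob (word_prod T w))"
      unfolding e K0_def using C t by (intro mult_left_mono frob_conj) auto
    also have "\<dots> \<le> C * \<tau>^length w * ((K0 + 1) * frob (word_prod T w))"
      using C t by (intro mult_left_mono mult_right_mono) (auto simp: frob_nonneg)
    also have "\<dots> = C' * \<tau>^length w * frob (word_prod T w)" unfolding C'_def by (simp add: mult_ac)
    finally show ?thesis .
  qed
  have key: "\<bar>prod_list (map (\<lambda>i. T i$1$1) w)\<bar> \<le> \<tau>^length w * \<bar>prod_list (map (\<lambda>i. T i$2$2) w)\<bar> \<or>
       \<bar>prod_list (map (\<lambda>i. T i$2$2) w)\<bar> \<le> \<tau>^length w * \<bar>prod_list (map (\<lambda>i. T i$1$1) w)\<bar>"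
    if w: "w \<in> words N" "w \<noteq> []" for w
  proof -
    have sw: "set w \<subseteq> {..<N}" using w by (auto simp: words_def)
    define W where "W = word_prod T w"
    have Wt: "W$2$1 = 0" "W$1$1 = prod_list (map (\<lambda>i. T i$1$1) w)" "W$2$2 = prod_list (map (\<lambda>i. T i$2$2) w)"
      using foldr_tri[of w T] sw tri unfolding W_def word_prod_def Tapp by auto
    have W0: "W$1$1 \<noteq> 0" "W$2$2 \<noteq> 0" using Wt sw nz by (auto simp: prod_list_zero_iff)
    have tn: "\<tau>^length w > 0" using t by simp
    have H: "\<forall>k\<ge>1. \<bar>det (mp W k)\<bar> \<le> C' * (\<tau>^length w)^k * frob (mp W k)"
    proof (intro allI impI)
      fix k :: nat
      have "concat (replicate k w) \<in> words N" using sw by (auto simp: words_def)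
      from D2[OF this] show "\<bar>det (mp W k)\<bar> \<le> C' * (\<tau>^length w)^k * frob (mp W k)"
        unfolding W_def wp_rep by (simp add: length_concat sum_list_replicate power_mult[symmetric] mult.commute)
    qed
    from ratio[OF Wt(1) W0 C' tn H] show ?thesis unfolding Wt .
  qed
  have "(\<forall>i<N. \<bar>T i$2$2\<bar> < \<bar>T i$1$1\<bar>) \<or> (\<forall>i<N. \<bar>T i$1$1\<bar> < \<bar>T i$2$2\<bar>)"
    by (rule consist[of N "\<lambda>i. T i$1$1" "\<lambda>i. T i$2$2" \<tau>]) (use nz t key in auto)
  thus ?thesis unfolding Tapp .
qed



lemma cont_e: "continuous_on UNIV (\<lambda>B::real^2^2. B$k$l)"
  by (intro continuous_on_component continuous_on_id)

lemma cont_conj: "continuous_on UNIV (\<lambda>B::real^2^2. ((P::real^2^2) ** B ** (Q::real^2^2))$i$j)"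
  unfolding mm by (intro continuous_intros cont_e)

lemma tendsto_conj:
  fixes V :: "'a \<Rightarrow> real^2^2"
  assumes "\<And>i j. ((\<lambda>n. V n $i$j) \<longlongrightarrow> K$i$j) F"
  shows "((\<lambda>n. (P::real^2^2) ** V n ** Q) \<longlongrightarrow> P ** K ** (Q::real^2^2)) F"
  apply (rule vec_tendstoI)+
  unfolding mm by (intro tendsto_intros assms)

lemma inv_conj:
  assumes R: "invertible (R::real^2^2)" and T: "invertible T"
  shows "matrix_inv (R ** T ** matrix_inv R) = R ** matrix_inv T ** matrix_inv R"
proof -
  note i = inv_props[OF R] and j = inv_props[OF T]
  have "det (R ** T ** matrix_inv R) \<noteq> 0" using conj_facts(5)[OF R] T invertible_det_nz by metis
  hence inv: "invertible (R ** T ** matrix_inv R)" using invertible_det_nz by blast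
  have "(R ** matrix_inv T ** matrix_inv R) ** (R ** T ** matrix_inv R)
      = R ** matrix_inv T ** (matrix_inv R ** R) ** T ** matrix_inv R" by (simp add: matrix_mul_assoc)
  also have "\<dots> = R ** (matrix_inv T ** T) ** matrix_inv R" by (simp add: i(2) matrix_mul_assoc)
  also have "\<dots> = mat 1" by (simp add: j(2) i(1))
  finally show ?thesis by (rule inv_unique[OF inv])
qed

lemma inv_abs_lt: assumes "(x::real) \<noteq> 0" "\<bar>x\<bar> < \<bar>y\<bar>" shows "\<bar>1/y\<bar> < \<bar>1/x\<bar>"
proof -
  have "0 < \<bar>x\<bar>" using assms by simp
  hence "1/\<bar>y\<bar> < 1/\<bar>x\<bar>" using divide_strict_left_mono[of "\<bar>x\<bar>" "\<bar>y\<bar>" 1] assms by auto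
  thus ?thesis by (simp add: abs_divide)
qed

lemma prod_abs_le: "(\<forall>i\<in>set w. \<bar>f i\<bar> \<le> \<bar>g i\<bar>) \<Longrightarrow> \<bar>prod_list (map f w)\<bar> \<le> \<bar>prod_list (map (g::nat\<Rightarrow>real) w)\<bar>"
  by (induction w) (auto simp: abs_mult intro: mult_mono)

lemma scal_conj: "(P::real^2^2) ** (c *\<^sub>R (X::real^2^2)) ** (Q::real^2^2) = c *\<^sub>R (P ** X ** Q)"
  by (simp add: meq mm algebra_simps)

lemma single:
  fixes A :: "nat \<Rightarrow> real^2^2"
  assumes R: "invertible (R::real^2^2)" and Ai: "\<forall>i<N. invertible (A i)" and N: "0 < N"
    and tri: "\<forall>i<N. (matrix_inv R ** A i ** R)$2$1 = 0"
    and lt: "\<forall>i<N. \<bar>(matrix_inv R ** A i ** R)$1$1\<bar> < \<bar>(matrix_inv R ** A i ** R)$2$2\<bar>"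
  shows "\<exists>L. furstenberg_dirs N A = {L}"
proof -
  define R' where "R' = matrix_inv R"
  note i = inv_props[OF R, folded R'_def]
  define T where "T = (\<lambda>i. R' ** A i ** R)"
  have Tapp: "T i = R' ** A i ** R" for i by (simp add: T_def)
  have Ti: "invertible (T i)" if "i < N" for i
    using Ai that conj_facts(4)[OF R] invertible_det_nz unfolding Tapp R'_def by metis
  have Tt: "T i$2$1 = 0" if "i < N" for i using tri that unfolding Tapp R'_def by auto
  have nz: "T i$1$1 \<noteq> 0 \<and> T i$2$2 \<noteq> 0" if "i < N" for i
    using inv_tri(1,2)[OF Ti[OF that] Tt[OF that]] by auto
  have Tinv: "matrix_inv (T i) = mk (1/T i$1$1) (- T i$1$2/(T i$1$1*T i$2$2)) 0 (1/T i$2$2)" if "i < N" for i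
    using inv_tri(3)[OF Ti[OF that] Tt[OF that]] .
  have Aeq: "A i = R ** T i ** R'" for i unfolding Tapp R'_def using conj_facts(3)[OF R] by simp
  have Ainv: "matrix_inv (A i) = R ** matrix_inv (T i) ** R'" if "i < N" for i
    unfolding Aeq R'_def by (rule inv_conj[OF R Ti[OF that]])
  have wip: "word_inv_prod A w = R ** word_inv_prod T w ** R'" if "set w \<subseteq> {..<N}" for w
    unfolding word_inv_prod_def
    by (rule foldr_conj[where B="\<lambda>i. matrix_inv (A i)" and C="\<lambda>i. matrix_inv (T i)"]) (use i Ainv that in auto)
  have wipT: "(word_inv_prod T w)$2$1 = 0 \<and> (word_inv_prod T w)$1$1 = prod_list (map (\<lambda>i. 1/T i$1$1) w) \<and>
     (word_inv_prod T w)$2$2 = prod_list (map (\<lambda>i. 1/T i$2$2) w)" if "set w \<subseteq> {..<N}" for w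
  proof -
    have h1: "\<forall>i\<in>set w. matrix_inv (T i)$2$1 = 0" using that Tinv by auto
    have p1: "map (\<lambda>i. matrix_inv (T i)$1$1) w = map (\<lambda>i. 1/T i$1$1) w"
      by (rule map_cong) (use that Tinv in auto)
    have p2: "map (\<lambda>i. matrix_inv (T i)$2$2) w = map (\<lambda>i. 1/T i$2$2) w"
      by (rule map_cong) (use that Tinv in auto)
    show ?thesis using foldr_tri[OF h1] unfolding word_inv_prod_def p1 p2 by simp
  qed
  define G where "G B = R' ** B ** R" for B
  have GG: "G (R ** X ** R') = X" for X
    unfolding G_def by (simp add: matrix_mul_assoc i) (simp add: matrix_mul_assoc[symmetric] i)
  define F where "F = {B. (G B)$2$1 = 0 \<and> \<bar>(G B)$2$2\<bar> \<le> \<bar>(G B)$1$1\<bar>}"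
  have Fc: "closed F" unfolding F_def G_def
    by (intro closed_Collect_conj closed_Collect_eq closed_Collect_le continuous_intros cont_conj)
  define S where "S = {c *\<^sub>R word_inv_prod A w | c w. w \<in> words N}"
  have SF: "S \<subseteq> F"
  proof
    fix B assume "B \<in> S"
    then obtain c w where B: "B = c *\<^sub>R word_inv_prod A w" and w: "w \<in> words N" unfolding S_def by blast
    have sw: "set w \<subseteq> {..<N}" using w by (auto simp: words_def)
    have GB: "G B = c *\<^sub>R word_inv_prod T w" unfolding B wip[OF sw] G_def scal_conj
      using GG[unfolded G_def] by simp
    have "\<bar>prod_list (map (\<lambda>i. 1/T i$2$2) w)\<bar> \<le> \<bar>prod_list (map (\<lambda>i. 1/T i$1$1) w)\<bar>"
    proof (rule prod_abs_le, intro ballI)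
      fix i assume "i \<in> set w"
      hence iN: "i < N" using sw by auto
      show "\<bar>1/T i$2$2\<bar> \<le> \<bar>1/T i$1$1\<bar>" using lt iN nz[OF iN] unfolding Tapp R'_def
        by (intro less_imp_le inv_abs_lt) auto
    qed
    thus "B \<in> F" unfolding F_def mem_Collect_eq GB using wipT[OF sw] by (simp add: abs_mult mult_left_mono)
  qed
  have cF: "closure S \<subseteq> F" by (rule closure_minimal[OF SF Fc])
  define L where "L = {x::real^2. (R' *v x)$2 = 0}"
  have rangeL: "range ((*v) B) = L" if BF: "B \<in> F" and d: "det B = 0" and B0: "B \<noteq> 0" for B
  proof -
    have G21: "(G B)$2$1 = 0" and Gle: "\<bar>(G B)$2$2\<bar> \<le> \<bar>(G B)$1$1\<bar>" using BF unfolding F_def by auto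
    have "det (G B) = 0" unfolding G_def R'_def using conj_facts(4)[OF R] d by simp
    hence "(G B)$1$1 * (G B)$2$2 = 0" using G21 by (simp add: det_2)
    hence G22: "(G B)$2$2 = 0" using Gle by auto
    have RB: "R' ** B = G B ** R'" unfolding G_def by (simp add: matrix_mul_assoc[symmetric] i)
    have sub: "(R' *v (B *v x))$2 = 0" for x
    proof -
      have "R' *v (B *v x) = G B *v (R' *v x)" by (simp add: matrix_vector_mul_assoc RB)
      thus ?thesis by (simp add: mv G21 G22)
    qed
    obtain x0 where x0: "B *v x0 \<noteq> 0" using B0 matrix_eq[of B 0] by auto
    define y where "y = B *v x0"
    define y' where "y' = R' *v y"
    have y'2: "y'$2 = 0" unfolding y'_def y_def by (rule sub)
    have RR: "R *v (R' *v z) = z" for z by (simp add: matrix_vector_mul_assoc i)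
    have y'1: "y'$1 \<noteq> 0"
    proof
      assume "y'$1 = 0"
      hence "y' = 0" using y'2 by (simp add: veq)
      hence "y = 0" using RR[of y] unfolding y'_def by simp
      thus False using x0 unfolding y_def by simp
    qed
    show ?thesis
    proof
      show "range ((*v) B) \<subseteq> L" unfolding L_def using sub by auto
      show "L \<subseteq> range ((*v) B)"
      proof
        fix z assume "z \<in> L"
        hence z2: "(R' *v z)$2 = 0" unfolding L_def by simp
        define c where "c = (R' *v z)$1 / y'$1"
        have "R' *v z = c *\<^sub>R y'" using z2 y'2 y'1 unfolding c_def by (simp add: veq)
        hence "z = c *\<^sub>R y" using RR[of z] RR[of y] unfolding y'_def by (simp add: matrix_vector_mult_scaleR)
        also have "\<dots> = B *v (c *\<^sub>R x0)" unfolding y_def by (simp add: matrix_vector_mult_scaleR)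
        finally show "z \<in> range ((*v) B)" by blast
      qed
    qed
  qed
  have allL: "X = L" if Xin: "X \<in> furstenberg_dirs N A" for X
  proof -
    obtain B where X: "X = range ((*v) B)" and r: "rank B = 1" and Bc: "B \<in> closure S"
      using Xin unfolding furstenberg_dirs_def S_def by blast
    have "B \<noteq> 0" using r rank_eq_0[of B] by auto
    moreover have "det B = 0" using r det_eq_0_rank[of B] by simp
    ultimately show ?thesis unfolding X using rangeL cF Bc by blast
  qed
  \<comment> \<open>existence\<close>
  have N0: "0 < N" by fact
  define U where "U = matrix_inv (T 0)"
  define \<alpha> where "\<alpha> = U$1$1"
  define \<beta> where "\<beta> = U$1$2"
  define \<delta> where "\<delta> = U$2$2"
  have Ut: "U$2$1 = 0" and Ua: "\<alpha> = 1/T 0$1$1" and Ud: "\<delta> = 1/T 0$2$2"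
    unfolding U_def \<alpha>_def \<delta>_def Tinv[OF N0] by simp_all
  have ad: "\<bar>\<delta>\<bar> < \<bar>\<alpha>\<bar>" "\<alpha> \<noteq> 0" "\<delta> \<noteq> 0"
  proof -
    have "\<bar>T 0$1$1\<bar> < \<bar>T 0$2$2\<bar>" using lt N0 unfolding Tapp R'_def by auto
    thus "\<bar>\<delta>\<bar> < \<bar>\<alpha>\<bar>" unfolding Ua Ud using nz[OF N0] by (intro inv_abs_lt) auto
    show "\<alpha> \<noteq> 0" "\<delta> \<noteq> 0" unfolding Ua Ud using nz[OF N0] by auto
  qed
  have amd: "\<alpha> - \<delta> \<noteq> 0" using ad by auto
  define V where "V n = (1/\<alpha>^n) *\<^sub>R mp U n" for n
  define K where "K = mk 1 (\<beta>/(\<alpha> - \<delta>)) 0 0"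
  have rho: "((\<lambda>n. (\<delta>/\<alpha>)^n) \<longlongrightarrow> 0) sequentially"
    by (rule LIMSEQ_power_zero) (use ad in \<open>simp add: abs_divide\<close>)
  have Vn: "V n$1$1 = 1" "V n$2$1 = 0" "V n$2$2 = (\<delta>/\<alpha>)^n"
     "V n$1$2 = \<beta> * (1 - (\<delta>/\<alpha>)^n) / (\<alpha> - \<delta>)" for n
  proof -
    have m: "(mp U n)$2$1 = 0" "(mp U n)$1$1 = \<alpha>^n" "(mp U n)$2$2 = \<delta>^n"
      "(\<alpha> - \<delta>) * (mp U n)$1$2 = \<beta> * (\<alpha>^n - \<delta>^n)"
      using mp_tri[OF Ut, of n] unfolding \<alpha>_def \<beta>_def \<delta>_def by auto
    show "V n$1$1 = 1" "V n$2$1 = 0" "V n$2$2 = (\<delta>/\<alpha>)^n" using m ad unfolding V_def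
      by (simp_all add: power_divide)
    have xe: "(mp U n)$1$2 = \<beta> * (\<alpha>^n - \<delta>^n) / (\<alpha> - \<delta>)" using m(4) amd
      by (metis nonzero_mult_div_cancel_left)
    have an: "\<alpha>^n \<noteq> 0" using ad by simp
    have q: "(\<alpha>^n - \<delta>^n) / \<alpha>^n = 1 - (\<delta>/\<alpha>)^n" using an by (simp add: power_divide diff_divide_distrib)
    have "V n$1$2 = (\<alpha>^n - \<delta>^n) / \<alpha>^n * \<beta> / (\<alpha> - \<delta>)" unfolding V_def by (simp add: xe)
    thus "V n$1$2 = \<beta> * (1 - (\<delta>/\<alpha>)^n) / (\<alpha> - \<delta>)" unfolding q by simp
  qed
  have VK: "((\<lambda>n. V n $i$j) \<longlongrightarrow> K$i$j) sequentially" for i j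
  proof -
    have l12: "((\<lambda>n. \<beta> * (1 - (\<delta>/\<alpha>)^n) / (\<alpha> - \<delta>)) \<longlongrightarrow> \<beta> * (1 - 0) / (\<alpha> - \<delta>)) sequentially"
      by (intro tendsto_intros rho amd)
    show ?thesis
      using exhaust_2[of i] exhaust_2[of j] l12 rho by (auto simp: Vn K_def)
  qed
  define B0 where "B0 = R ** K ** R'"
  define f where "f n = (1/\<alpha>^n) *\<^sub>R word_inv_prod A (replicate n 0)" for n
  have fS: "f n \<in> S" for n
  proof -
    have "replicate n 0 \<in> words N" using N0 by (auto simp: words_def)
    thus ?thesis unfolding S_def f_def by blast
  qed
  have fV: "f n = R ** V n ** R'" for n
  proof -
    have "set (replicate n (0::nat)) \<subseteq> {..<N}" using N0 by auto
    from wip[OF this] show ?thesis unfolding f_def V_def scal_conj wip_rep U_def by simp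
  qed
  have "f \<longlonglongrightarrow> B0" unfolding fV B0_def by (rule tendsto_conj[OF VK])
  hence B0c: "B0 \<in> closure S" unfolding closure_sequential using fS by blast
  have GB0: "G B0 = K" unfolding B0_def by (rule GG)
  have B0nz: "B0 \<noteq> 0"
  proof
    assume "B0 = 0" hence "G B0 = 0" unfolding G_def by simp
    thus False using GB0 unfolding K_def by (simp add: meq)
  qed
  have dB0: "det B0 = 0"
  proof -
    have "det B0 = det (G B0)" unfolding G_def R'_def using conj_facts(4)[OF R] by simp
    thus ?thesis unfolding GB0 K_def by (simp add: det_2)
  qed
  have "rank B0 \<noteq> 0" using B0nz rank_eq_0 by blast
  moreover have "rank B0 < 2" using dB0 det_eq_0_rank[of B0] by simp
  ultimately have rB0: "rank B0 = 1" by simp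
  have "L \<in> furstenberg_dirs N A"
    using rangeL[OF subsetD[OF cF B0c] dB0 B0nz] rB0 B0c unfolding furstenberg_dirs_def S_def by blast
  hence "furstenberg_dirs N A = {L}" using allL by blast
  thus ?thesis by blast
qed



theorem mainTheorem11:
  fixes N :: nat and A :: "nat \<Rightarrow> real^2^2"
  assumes "N \<ge> 1"
    and "\<forall>i<N. invertible (A i)"
    and "dominated N A"
    and "reducible N A"
    and "\<forall>i<N. opnorm (A i) < 1"
    and "\<not> (\<exists>L. furstenberg_dirs N A = {L})"
  shows "(\<exists>P::real^2^2. invertible P \<and>
            (\<forall>i<N. (matrix_inv P ** A i ** P) $ 2 $ 1 = 0 \<and>
                   0 < \<bar>(matrix_inv P ** A i ** P) $ 2 $ 2\<bar> \<and>
                   \<bar>(matrix_inv P ** A i ** P) $ 2 $ 2\<bar> < \<bar>(matrix_inv P ** A i ** P) $ 1 $ 1\<bar> \<and>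
                   \<bar>(matrix_inv P ** A i ** P) $ 1 $ 1\<bar> < 1))
       \<and> \<not> (\<exists>Q::real^2^2. invertible Q \<and> (\<forall>i<N. diagonal_mat (matrix_inv Q ** A i ** Q)))"
proof -
  have N0: "0 < N" using assms(1) by simp
  note Ai = assms(2) and dom = assms(3) and nsing = assms(6)
  obtain v :: "real^2" where v0: "v \<noteq> 0" and ev: "\<forall>i<N. \<exists>c. A i *v v = c *\<^sub>R v"
    using assms(4) unfolding reducible_def by blast
  define P where "P = (if v$1 = 0 then mk 0 1 (v$2) 0 else mk (v$1) 0 (v$2) 1)"
  have v2: "v$1 = 0 \<Longrightarrow> v$2 \<noteq> 0" using v0 by (auto simp: veq)
  have "det P \<noteq> 0" unfolding P_def using v2 by (auto simp: det_2)
  hence Pinv: "invertible P" using invertible_det_nz by blast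
  define P' where "P' = matrix_inv P"
  note pi = inv_props[OF Pinv, folded P'_def]
  have Pe: "P *v axis 1 1 = v" unfolding P_def by (auto simp: veq mv axis_def)
  define T where "T i = P' ** A i ** P" for i
  have Tprops: "T i$2$1 = 0 \<and> \<bar>T i$1$1\<bar> < 1 \<and> T i$2$2 \<noteq> 0" if iN: "i < N" for i
  proof -
    obtain c where c: "A i *v v = c *\<^sub>R v" using ev iN by blast
    have "T i *v axis 1 1 = P' *v (A i *v (P *v axis 1 1))"
      unfolding T_def by (simp add: matrix_vector_mul_assoc matrix_mul_assoc)
    also have "\<dots> = c *\<^sub>R (P' *v (P *v axis 1 1))" unfolding Pe c by (simp add: matrix_vector_mult_scaleR)
    also have "\<dots> = c *\<^sub>R axis 1 1" by (simp add: matrix_vector_mul_assoc pi)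
    finally have Te: "T i *v axis 1 1 = c *\<^sub>R axis 1 1" .
    have t21: "T i$2$1 = 0" and t11: "T i$1$1 = c" using Te unfolding veq by (simp_all add: mv axis_def)
    have "norm (A i *v v) \<le> opnorm (A i) * norm v" unfolding opnorm_def by (rule onorm) simp
    also have "\<dots> < norm v" using assms(5) iN v0 by simp
    finally have "\<bar>c\<bar> * norm v < norm v" unfolding c by simp
    hence c1: "\<bar>c\<bar> < 1" using v0 by simp
    have Ti: "invertible (T i)"
      using Ai iN conj_facts(4)[OF Pinv] invertible_det_nz unfolding T_def P'_def by metis
    show ?thesis using t21 t11 c1 inv_tri(2)[OF Ti t21] by simp
  qed
  have tri: "\<forall>i<N. (matrix_inv P ** A i ** P)$2$1 = 0" using Tprops unfolding T_def P'_def by simp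
  have part1: "\<exists>P::real^2^2. invertible P \<and>
            (\<forall>i<N. (matrix_inv P ** A i ** P) $ 2 $ 1 = 0 \<and>
                   0 < \<bar>(matrix_inv P ** A i ** P) $ 2 $ 2\<bar> \<and>
                   \<bar>(matrix_inv P ** A i ** P) $ 2 $ 2\<bar> < \<bar>(matrix_inv P ** A i ** P) $ 1 $ 1\<bar> \<and>
                   \<bar>(matrix_inv P ** A i ** P) $ 1 $ 1\<bar> < 1)"
  proof (cases "\<forall>i<N. \<bar>(matrix_inv P ** A i ** P)$2$2\<bar> < \<bar>(matrix_inv P ** A i ** P)$1$1\<bar>")
    case True
    show ?thesis using True Tprops Pinv unfolding T_def P'_def by force
  next
    case False
    hence "\<forall>i<N. \<bar>(matrix_inv P ** A i ** P)$1$1\<bar> < \<bar>(matrix_inv P ** A i ** P)$2$2\<bar>"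
      using sign[OF Pinv Ai dom tri] by blast
    from single[OF Pinv Ai N0 tri this] nsing show ?thesis by blast
  qed
  have part2: "\<not> (\<exists>Q::real^2^2. invertible Q \<and> (\<forall>i<N. diagonal_mat (matrix_inv Q ** A i ** Q)))"
  proof
    assume "\<exists>Q::real^2^2. invertible Q \<and> (\<forall>i<N. diagonal_mat (matrix_inv Q ** A i ** Q))"
    then obtain Q :: "real^2^2" where Q: "invertible Q" and dg: "\<forall>i<N. diagonal_mat (matrix_inv Q ** A i ** Q)" by blast
    have qt: "\<forall>i<N. (matrix_inv Q ** A i ** Q)$2$1 = 0" and qt2: "\<forall>i<N. (matrix_inv Q ** A i ** Q)$1$2 = 0"
      using dg unfolding diagonal_mat_def by auto
    show False
    proof (cases "\<forall>i<N. \<bar>(matrix_inv Q ** A i ** Q)$1$1\<bar> < \<bar>(matrix_inv Q ** A i ** Q)$2$2\<bar>")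
      case True
      from single[OF Q Ai N0 qt True] nsing show False by blast
    next
      case False
      hence lt: "\<forall>i<N. \<bar>(matrix_inv Q ** A i ** Q)$2$2\<bar> < \<bar>(matrix_inv Q ** A i ** Q)$1$1\<bar>"
        using sign[OF Q Ai dom qt] by blast
      define Sw where "Sw = mk 0 1 1 0"
      define Q2 where "Q2 = Q ** Sw"
      have SS: "Sw ** Sw = mat 1" unfolding Sw_def by (simp add: meq mm mat1)
      have "det Q2 \<noteq> 0" unfolding Q2_def det_mul using Q invertible_det_nz[of Q]
        by (simp add: Sw_def det_2)
      hence Q2i: "invertible Q2" using invertible_det_nz by blast
      have "(Sw ** matrix_inv Q) ** Q2 = Sw ** (matrix_inv Q ** Q) ** Sw" unfolding Q2_def by (simp add: matrix_mul_assoc)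
      also have "\<dots> = mat 1" using inv_props(2)[OF Q] SS by simp
      finally have iQ2: "matrix_inv Q2 = Sw ** matrix_inv Q" by (rule inv_unique[OF Q2i])
      have D: "matrix_inv Q2 ** A i ** Q2 = Sw ** (matrix_inv Q ** A i ** Q) ** Sw" for i
        using iQ2 unfolding Q2_def by (simp add: matrix_mul_assoc)
      have Dent: "(matrix_inv Q2 ** A i ** Q2)$2$1 = (matrix_inv Q ** A i ** Q)$1$2"
          "(matrix_inv Q2 ** A i ** Q2)$1$1 = (matrix_inv Q ** A i ** Q)$2$2"
          "(matrix_inv Q2 ** A i ** Q2)$2$2 = (matrix_inv Q ** A i ** Q)$1$1" for i
        unfolding D by (simp_all add: mm Sw_def)
      have t2: "\<forall>i<N. (matrix_inv Q2 ** A i ** Q2)$2$1 = 0" using qt2 Dent by simp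
      have l2: "\<forall>i<N. \<bar>(matrix_inv Q2 ** A i ** Q2)$1$1\<bar> < \<bar>(matrix_inv Q2 ** A i ** Q2)$2$2\<bar>"
        using lt Dent by simp
      from single[OF Q2i Ai N0 t2 l2] nsing show False by blast
    qed
  qed
  show ?thesis using part1 part2 by blast
qed

end
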